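(* Let $S$ be a (non-empty) right zero semigroup. Then $T=\begin{pmatrix}\ell^{1}(S)&\ell^{1}(S)\\0&\ell^{1}(S)\end{pmatrix}$ is not approximately biprojective.
   Context: A right zero semigroup is a semigroup with $st=t$ for all $s,t\in S$. For a Banach algebra $A$, $T=\begin{pmatrix}A&A\\0&A\end{pmatrix}$ is the algebra of upper triangular matrices with entries in $A$, matrix operations and norm $\|a\|+\|x\|+\|b\|$. A Banach algebra $B$ is approximately biprojective if there is a net $(\rho_\alpha)$ of continuous $B$-bimodule morphisms $B\to B\otimes_pB$ with $\pi_B\circ\rho_\alpha(b)\to b$ for all $b$, where $\pi_B(b\otimes c)=bc$. *)

theory Defs
  imports "HOL-Analysis.Analysis"
begin

definition right_zero_semigroup :: "('a \<Rightarrow> 'a \<Rightarrow> 'a) \<Rightarrow> bool" where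
  "right_zero_semigroup m \<longleftrightarrow> (\<forall>s t u. m (m s t) u = m s (m t u)) \<and> (\<forall>s t. m s t = t)"

definition l1 :: "('x \<Rightarrow> complex) set" where
  "l1 = {f. (\<lambda>x. norm (f x)) summable_on UNIV}"

definition l1norm :: "('x \<Rightarrow> complex) \<Rightarrow> real" where
  "l1norm f = (\<Sum>\<^sub>\<infinity>x. norm (f x))"

text \<open>Convolution product of l1(S) for a semigroup (S,m): delta_s * delta_t = delta_(m s t).\<close>
definition conv :: "('a \<Rightarrow> 'a \<Rightarrow> 'a) \<Rightarrow> ('a \<Rightarrow> complex) \<Rightarrow> ('a \<Rightarrow> complex) \<Rightarrow> 'a \<Rightarrow> complex" where
  "conv m f g w = (\<Sum>\<^sub>\<infinity>(s,t)\<in>{(s,t). m s t = w}. f s * g t)"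

text \<open>An element of
  T = [[l1(S), l1(S)],[0, l1(S)]] is a function u :: pos \<times> 'a \<Rightarrow> complex, with entries
  a = u(P11,-), x = u(P12,-), b = u(P22,-); its norm ||a||+||x||+||b|| is l1norm u.\<close>
datatype pos = P11 | P12 | P22

definition entry :: "('a \<times> 'b \<Rightarrow> complex) \<Rightarrow> 'a \<Rightarrow> 'b \<Rightarrow> complex" where
  "entry u i = (\<lambda>s. u (i, s))"

definition tmult :: "('a \<Rightarrow> 'a \<Rightarrow> 'a) \<Rightarrow> (pos \<times> 'a \<Rightarrow> complex) \<Rightarrow> (pos \<times> 'a \<Rightarrow> complex)
    \<Rightarrow> pos \<times> 'a \<Rightarrow> complex" where
  "tmult m u v = (\<lambda>(i, w). case i of
      P11 \<Rightarrow> conv m (entry u P11) (entry v P11) w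
    | P12 \<Rightarrow> conv m (entry u P11) (entry v P12) w + conv m (entry u P12) (entry v P22) w
    | P22 \<Rightarrow> conv m (entry u P22) (entry v P22) w)"

text \<open>Projective tensor product T \<otimes>_p T, realised (via the isometric identification
  l1(X) \<otimes>_p l1(Y) = l1(X \<times> Y), elementary tensor b \<otimes> c = (p,q) \<mapsto> b p * c q)
  as l1((pos \<times> 'a) \<times> (pos \<times> 'a)). Its T-bimodule actions a.(b\<otimes>c) = ab\<otimes>c and
  (b\<otimes>c).a = b\<otimes>ca, and the product map \<pi>(b\<otimes>c) = bc.\<close>
definition tens_lmult :: "('a \<Rightarrow> 'a \<Rightarrow> 'a) \<Rightarrow> (pos \<times> 'a \<Rightarrow> complex)
    \<Rightarrow> ((pos \<times> 'a) \<times> (pos \<times> 'a) \<Rightarrow> complex) \<Rightarrow> (pos \<times> 'a) \<times> (pos \<times> 'a) \<Rightarrow> complex" where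
  "tens_lmult m a F = (\<lambda>(p, q). tmult m a (\<lambda>p'. F (p', q)) p)"

definition tens_rmult :: "('a \<Rightarrow> 'a \<Rightarrow> 'a) \<Rightarrow> ((pos \<times> 'a) \<times> (pos \<times> 'a) \<Rightarrow> complex)
    \<Rightarrow> (pos \<times> 'a \<Rightarrow> complex) \<Rightarrow> (pos \<times> 'a) \<times> (pos \<times> 'a) \<Rightarrow> complex" where
  "tens_rmult m F a = (\<lambda>(p, q). tmult m (\<lambda>q'. F (p, q')) a q)"

definition delta :: "'x \<Rightarrow> 'x \<Rightarrow> complex" where
  "delta p = (\<lambda>x. if x = p then 1 else 0)"

definition tens_pi :: "('a \<Rightarrow> 'a \<Rightarrow> 'a) \<Rightarrow> ((pos \<times> 'a) \<times> (pos \<times> 'a) \<Rightarrow> complex)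
    \<Rightarrow> pos \<times> 'a \<Rightarrow> complex" where
  "tens_pi m F = (\<lambda>r. \<Sum>\<^sub>\<infinity>(p, q). F (p, q) * tmult m (delta p) (delta q) r)"

definition bimod_mor :: "('a \<Rightarrow> 'a \<Rightarrow> 'a)
    \<Rightarrow> ((pos \<times> 'a \<Rightarrow> complex) \<Rightarrow> ((pos \<times> 'a) \<times> (pos \<times> 'a) \<Rightarrow> complex)) \<Rightarrow> bool" where
  "bimod_mor m \<rho> \<longleftrightarrow>
     (\<forall>u\<in>l1. \<rho> u \<in> l1)
   \<and> (\<forall>u\<in>l1. \<forall>v\<in>l1. \<rho> (\<lambda>x. u x + v x) = (\<lambda>y. \<rho> u y + \<rho> v y))
   \<and> (\<forall>u\<in>l1. \<forall>c::complex. \<rho> (\<lambda>x. c * u x) = (\<lambda>y. c * \<rho> u y))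
   \<and> (\<exists>C. \<forall>u\<in>l1. l1norm (\<rho> u) \<le> C * l1norm u)
   \<and> (\<forall>a\<in>l1. \<forall>u\<in>l1. \<rho> (tmult m a u) = tens_lmult m a (\<rho> u)
                    \<and> \<rho> (tmult m u a) = tens_rmult m (\<rho> u) a)"

definition approx_biprojective :: "('a \<Rightarrow> 'a \<Rightarrow> 'a) \<Rightarrow> 'i itself \<Rightarrow> bool" where
  "approx_biprojective m (_ :: 'i itself) \<longleftrightarrow>
    (\<exists>(I :: 'i set) (le :: 'i \<Rightarrow> 'i \<Rightarrow> bool) \<rho>.
        I \<noteq> {}
      \<and> (\<forall>\<alpha>\<in>I. le \<alpha> \<alpha>)
      \<and> (\<forall>\<alpha>\<in>I. \<forall>\<beta>\<in>I. \<forall>\<gamma>\<in>I. le \<alpha> \<beta> \<longrightarrow> le \<beta> \<gamma> \<longrightarrow> le \<alpha> \<gamma>)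
      \<and> (\<forall>\<alpha>\<in>I. \<forall>\<beta>\<in>I. \<exists>\<gamma>\<in>I. le \<alpha> \<gamma> \<and> le \<beta> \<gamma>)
      \<and> (\<forall>\<alpha>\<in>I. bimod_mor m (\<rho> \<alpha>))
      \<and> (\<forall>b\<in>l1. \<forall>\<epsilon>>0. \<exists>\<alpha>\<^sub>0\<in>I. \<forall>\<alpha>\<in>I. le \<alpha>\<^sub>0 \<alpha> \<longrightarrow>
            l1norm (\<lambda>x. tens_pi m (\<rho> \<alpha> b) x - b x) < \<epsilon>))"

end

theory Submission
  imports Defs
begin

lemma conv_rz:
  assumes rz: "\<And>s t. m s t = t"
  shows "conv m f g w = infsum f UNIV * g w"
proof -
  have e: "{(s,t). m s t = w} = (\<lambda>s. (s,w)) ` UNIV" using rz by auto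
  have "conv m f g w = infsum (\<lambda>(s,t). f s * g t) ((\<lambda>s. (s,w)) ` UNIV)"
    unfolding conv_def e by simp
  also have "\<dots> = infsum ((\<lambda>(s,t). f s * g t) \<circ> (\<lambda>s. (s,w))) UNIV"
    by (rule infsum_reindex) (auto simp: inj_on_def)
  also have "\<dots> = infsum (\<lambda>s. f s * g w) UNIV" by (simp add: o_def)
  also have "\<dots> = infsum f UNIV * g w" by (rule infsum_cmult_left')
  finally show ?thesis .
qed

lemma has_sum_single0:
  fixes f :: "'x \<Rightarrow> 'b::{comm_monoid_add,topological_space}"
  assumes "\<And>x. x \<noteq> a \<Longrightarrow> f x = 0"
  shows "(f has_sum f a) UNIV"
proof -
  have "(f has_sum f a) {a}" using has_sum_finite[of "{a}" f] by simp
  then show ?thesis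
    using has_sum_cong_neutral[of "{a}" UNIV f f "f a"] assms by auto
qed

lemma infsum_delta: "infsum (delta a) UNIV = 1"
proof -
  have "(delta a has_sum delta a a) UNIV" by (rule has_sum_single0) (simp add: delta_def)
  then have "infsum (delta a) UNIV = delta a a" by (rule infsumI)
  then show ?thesis by (simp add: delta_def)
qed

lemma delta_l1: "delta a \<in> l1"
proof -
  have "((\<lambda>x. norm (delta a x)) has_sum norm (delta a a)) UNIV"
    by (rule has_sum_single0) (simp add: delta_def)
  then show ?thesis unfolding l1_def summable_on_def by blast
qed

lemma entry_delta: "entry (delta (i,s)) j = (if i = j then delta s else (\<lambda>_. 0))"
  by (auto simp: entry_def delta_def fun_eq_iff)

lemma delta_same: "delta w w = 1" by (simp add: delta_def)
lemma delta_diff: "t \<noteq> w \<Longrightarrow> delta t w = 0" by (simp add: delta_def)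

definition mu :: "pos \<Rightarrow> pos \<Rightarrow> pos \<Rightarrow> bool" where
  "mu i j k \<longleftrightarrow> (i=P11\<and>j=P11\<and>k=P11) \<or> (i=P11\<and>j=P12\<and>k=P12) \<or> (i=P12\<and>j=P22\<and>k=P12) \<or> (i=P22\<and>j=P22\<and>k=P22)"

lemma mu_unique: "mu i j k \<Longrightarrow> mu i j k' \<Longrightarrow> k = k'"
  by (cases i; cases j; cases k; cases k'; simp add: mu_def)

lemma tmult_delta:
  assumes rz: "\<And>s t. m s t = t"
  shows "tmult m (delta (i,s)) (delta (j,t)) (k,w) = (if mu i j k \<and> t = w then 1 else 0)"
  by (cases i; cases j; cases k) (simp_all add: tmult_def conv_rz[OF rz] entry_delta infsum_delta mu_def delta_same delta_diff)

lemma l1_iff: "(u \<in> l1) = (u summable_on UNIV)"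
  unfolding l1_def using summable_on_iff_abs_summable_on_complex by auto

lemma tens_pi_fiber:
  assumes rz: "\<And>s t. m s t = t"
  shows "tens_pi m Y (k,w) = infsum Y {(p,q). mu (fst p) (fst q) k \<and> snd q = w}"
  unfolding tens_pi_def
proof (rule infsum_cong_neutral)
  fix x :: "(pos \<times> 'a) \<times> (pos \<times> 'a)"
  obtain i s j t where x: "x = ((i,s),(j,t))" by (metis prod.exhaust)
  have T: "tmult m (delta (i,s)) (delta (j,t)) (k,w) = (if mu i j k \<and> t = w then 1 else 0)"
    by (rule tmult_delta[OF rz])
  show "x \<in> UNIV - {(p,q). mu (fst p) (fst q) k \<and> snd q = w} \<Longrightarrow>
        (case x of (p, q) \<Rightarrow> Y (p, q) * tmult m (delta p) (delta q) (k, w)) = 0"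
    unfolding x using T by auto
  show "x \<in> UNIV \<inter> {(p,q). mu (fst p) (fst q) k \<and> snd q = w} \<Longrightarrow>
        (case x of (p, q) \<Rightarrow> Y (p, q) * tmult m (delta p) (delta q) (k, w)) = Y x"
    unfolding x using T by auto
qed auto

lemma restr_summ:
  fixes f :: "'x \<Rightarrow> 'b::banach"
  assumes "f summable_on UNIV" "inj h"
  shows "(\<lambda>w. f (h w)) summable_on UNIV"
proof -
  have "f summable_on range h" by (rule summable_on_subset_banach[OF assms(1)]) auto
  then show ?thesis using summable_on_reindex[of h UNIV f] assms(2) by (simp add: o_def)
qed

lemma tmult_E:
  assumes rz: "\<And>s t. m s t = t"
  shows "tmult m (delta (P11,s0)) (delta (P12,s0)) = delta (P12,s0)"
    and "tmult m (delta (P12,s0)) (delta (P22,s0)) = delta (P12,s0)"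
proof -
  show "tmult m (delta (P11,s0)) (delta (P12,s0)) = delta (P12,s0)"
  proof
    fix x :: "pos \<times> 'a" obtain k w where x: "x = (k,w)" by fastforce
    show "tmult m (delta (P11,s0)) (delta (P12,s0)) x = delta (P12,s0) x"
      unfolding x tmult_delta[OF rz] by (cases k) (auto simp: mu_def delta_def)
  qed
  show "tmult m (delta (P12,s0)) (delta (P22,s0)) = delta (P12,s0)"
  proof
    fix x :: "pos \<times> 'a" obtain k w where x: "x = (k,w)" by fastforce
    show "tmult m (delta (P12,s0)) (delta (P22,s0)) x = delta (P12,s0) x"
      unfolding x tmult_delta[OF rz] by (cases k) (auto simp: mu_def delta_def)
  qed
qed

lemma key_zero:
  assumes rz: "\<And>s t. m s t = t"
  assumes eq: "tens_rmult m Y (delta (P12,s0)) = tens_lmult m (delta (P12,s0)) V"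
  shows "infsum (\<lambda>t. Y ((P11,s),(P11,t))) UNIV = 0"
proof -
  have "tens_rmult m Y (delta (P12,s0)) ((P11,s),(P12,s0)) = infsum (\<lambda>t. Y ((P11,s),(P11,t))) UNIV"
    by (simp add: tens_rmult_def tmult_def conv_rz[OF rz] entry_delta delta_same entry_def delta_diff)
  moreover have "tens_lmult m (delta (P12,s0)) V ((P11,s),(P12,s0)) = 0"
    by (simp add: tens_lmult_def tmult_def conv_rz[OF rz] entry_delta)
  ultimately show ?thesis using eq by metis
qed

theorem mainTheorem10:
  fixes m :: "'a \<Rightarrow> 'a \<Rightarrow> 'a"
  assumes "right_zero_semigroup m"
  shows "\<not> approx_biprojective m TYPE('i)"
proof
  assume AB: "approx_biprojective m TYPE('i)"
  obtain I :: "'i set" and le \<rho> where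
    P: "I \<noteq> {}
      \<and> (\<forall>\<alpha>\<in>I. le \<alpha> \<alpha>)
      \<and> (\<forall>\<alpha>\<in>I. \<forall>\<beta>\<in>I. \<forall>\<gamma>\<in>I. le \<alpha> \<beta> \<longrightarrow> le \<beta> \<gamma> \<longrightarrow> le \<alpha> \<gamma>)
      \<and> (\<forall>\<alpha>\<in>I. \<forall>\<beta>\<in>I. \<exists>\<gamma>\<in>I. le \<alpha> \<gamma> \<and> le \<beta> \<gamma>)
      \<and> (\<forall>\<alpha>\<in>I. bimod_mor m (\<rho> \<alpha>))
      \<and> (\<forall>b\<in>l1. \<forall>\<epsilon>>0. \<exists>\<alpha>\<^sub>0\<in>I. \<forall>\<alpha>\<in>I. le \<alpha>\<^sub>0 \<alpha> \<longrightarrow>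
            l1norm (\<lambda>x. tens_pi m (\<rho> \<alpha> b) x - b x) < \<epsilon>)"
    by (insert AB[unfolded approx_biprojective_def], elim exE, rule that, assumption)
  have refl: "\<forall>\<alpha>\<in>I. le \<alpha> \<alpha>" using P by (elim conjE)
  have mor: "\<forall>\<alpha>\<in>I. bimod_mor m (\<rho> \<alpha>)" using P by (elim conjE)
  have conv: "\<forall>b\<in>l1. \<forall>\<epsilon>>0. \<exists>\<alpha>\<^sub>0\<in>I. \<forall>\<alpha>\<in>I. le \<alpha>\<^sub>0 \<alpha> \<longrightarrow>
            l1norm (\<lambda>x. tens_pi m (\<rho> \<alpha> b) x - b x) < \<epsilon>" using P by (elim conjE)
  have rz: "\<And>s t. m s t = t" using assms unfolding right_zero_semigroup_def by blast
  define s0 :: 'a where "s0 = undefined"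
  define E11 where "E11 = delta (P11,s0)"
  define E12 where "E12 = delta (P12,s0)"
  define E22 where "E22 = delta (P22,s0)"
  have l1E: "E11 \<in> l1" "E12 \<in> l1" "E22 \<in> l1" unfolding E11_def E12_def E22_def by (simp_all add: delta_l1)
  obtain \<alpha> where \<alpha>I: "\<alpha> \<in> I" and
      \<alpha>all: "\<forall>\<beta>\<in>I. le \<alpha> \<beta> \<longrightarrow> l1norm (\<lambda>x. tens_pi m (\<rho> \<beta> E11) x - E11 x) < 1"
    using conv l1E(1) by (meson zero_less_one)
  have \<alpha>: "l1norm (\<lambda>x. tens_pi m (\<rho> \<alpha> E11) x - E11 x) < 1"
    using \<alpha>all \<alpha>I refl by blast
  define R where "R = \<rho> \<alpha>"
  have bm: "bimod_mor m R" using mor \<alpha>I R_def by blast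
  have Rl1: "\<forall>u\<in>l1. R u \<in> l1" using bm unfolding bimod_mor_def by blast
  have Rmod: "\<forall>a\<in>l1. \<forall>u\<in>l1. R (tmult m a u) = tens_lmult m a (R u)
                    \<and> R (tmult m u a) = tens_rmult m (R u) a"
    using bm unfolding bimod_mor_def by blast
  define Y where "Y = R E11"
  have Yl1: "Y \<in> l1" using Rl1 l1E unfolding Y_def by blast
  have Ys: "Y summable_on UNIV" using Yl1 l1_iff by blast
  have t1: "tmult m E11 E12 = E12" unfolding E11_def E12_def by (rule tmult_E(1)[OF rz])
  have t2: "tmult m E12 E22 = E12" unfolding E22_def E12_def by (rule tmult_E(2)[OF rz])
  have "R (tmult m E11 E12) = tens_rmult m (R E11) E12"
    using Rmod l1E by blast
  then have e1: "R E12 = tens_rmult m Y E12"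
    using t1 unfolding Y_def by simp
  have "R (tmult m E12 E22) = tens_lmult m E12 (R E22)"
    using Rmod l1E by blast
  then have e2: "R E12 = tens_lmult m E12 (R E22)"
    using t2 by simp
  have H: "\<And>s. infsum (\<lambda>t. Y ((P11,s),(P11,t))) UNIV = 0"
  proof -
    fix s
    have "tens_rmult m Y (delta (P12,s0)) = tens_lmult m (delta (P12,s0)) (R E22)"
      using e1 e2 unfolding E12_def by simp
    then show "infsum (\<lambda>t. Y ((P11,s),(P11,t))) UNIV = 0" by (rule key_zero[OF rz])
  qed
  have lt: "l1norm (\<lambda>x. tens_pi m Y x - E11 x) < 1" using \<alpha> unfolding Y_def R_def by simp
  define Z where "Z = tens_pi m Y"
  define D where "D = (\<lambda>x. Z x - E11 x)"
  have lt: "l1norm D < 1" using lt unfolding D_def Z_def by simp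
  define F :: "pos \<times> 'a \<Rightarrow> ((pos \<times> 'a) \<times> (pos \<times> 'a)) set"
    where "F r = {(p,q). mu (fst p) (fst q) (fst r) \<and> snd q = snd r}" for r
  have Zf: "Z r = infsum Y (F r)" for r
    unfolding Z_def F_def by (cases r) (simp add: tens_pi_fiber[OF rz])
  have nY: "(\<lambda>x. norm (Y x)) summable_on UNIV" using Yl1 unfolding l1_def by blast
  have nYF: "(\<lambda>x. norm (Y x)) summable_on (F r)" for r
    by (rule summable_on_subset_banach[OF nY]) auto
  have disj: "disjoint_family_on F UNIV"
    unfolding disjoint_family_on_def F_def
    by (auto intro: prod_eqI dest: mu_unique)
  have S1: "(\<lambda>r. infsum (\<lambda>x. norm (Y x)) (F r)) summable_on UNIV"
    by (rule summable_on_UnionD[OF summable_on_subset_banach[OF nY] nYF disj]) auto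
  have bound: "norm (Z r) \<le> infsum (\<lambda>x. norm (Y x)) (F r)" for r
    unfolding Zf by (rule norm_infsum_bound) (use nYF in simp)
  have nZ: "(\<lambda>r. norm (Z r)) summable_on UNIV"
    by (rule summable_on_comparison_test[OF S1]) (use bound in auto)
  have nE: "(\<lambda>r. norm (E11 r)) summable_on UNIV" using l1E(1) unfolding l1_def by blast
  have nD: "(\<lambda>r. norm (D r)) summable_on UNIV"
    by (rule summable_on_comparison_test[OF summable_on_add[OF nZ nE]])
       (auto simp: D_def norm_triangle_ineq4)
  have Ds: "D summable_on UNIV" by (rule abs_summable_summable[OF nD])
  have Zs: "Z summable_on UNIV" by (rule abs_summable_summable[OF nZ])
  have Es: "E11 summable_on UNIV" by (rule abs_summable_summable[OF nE])
  have injg: "inj (\<lambda>w::'a. (P11,w))" by (auto simp: inj_on_def)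
  have Dg: "(\<lambda>w. D (P11,w)) summable_on UNIV" using restr_summ[OF Ds injg] .
  have nDg: "(\<lambda>w. norm (D (P11,w))) summable_on UNIV" using restr_summ[OF nD injg] .
  have Eg: "(\<lambda>w. E11 (P11,w)) summable_on UNIV" using restr_summ[OF Es injg] .
  have n1: "norm (infsum (\<lambda>w. D (P11,w)) UNIV) \<le> infsum (\<lambda>w. norm (D (P11,w))) UNIV"
    by (rule norm_infsum_bound) (use nDg in simp)
  have "infsum (\<lambda>w. norm (D (P11,w))) UNIV = infsum (\<lambda>x. norm (D x)) (range (\<lambda>w::'a. (P11,w)))"
    using infsum_reindex[of "\<lambda>w::'a. (P11,w)" UNIV "\<lambda>x. norm (D x)"] injg by (simp add: o_def)
  also have "\<dots> \<le> infsum (\<lambda>x. norm (D x)) UNIV"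
    by (rule infsum_mono_neutral[OF summable_on_subset_banach[OF nD] nD]) auto
  also have "\<dots> < 1" using lt unfolding l1norm_def .
  finally have psiD: "norm (infsum (\<lambda>w. D (P11,w)) UNIV) < 1" using n1 by linarith
  have psiE: "infsum (\<lambda>w. E11 (P11,w)) UNIV = 1"
  proof -
    have "(\<lambda>w. E11 (P11,w)) = delta s0" by (auto simp: E11_def delta_def fun_eq_iff)
    then show ?thesis by (simp add: infsum_delta)
  qed
  have Fg: "F (P11,w) = (\<lambda>s. ((P11,s),(P11,w))) ` UNIV" for w
    unfolding F_def by (auto simp: mu_def image_def)
  have Zg: "Z (P11,w) = infsum (\<lambda>s. Y ((P11,s),(P11,w))) UNIV" for w
    unfolding Zf Fg by (subst infsum_reindex) (auto simp: inj_on_def o_def)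
  have sw: "(\<lambda>(w,s). Y ((P11,s),(P11,w))) summable_on (UNIV \<times> UNIV)"
  proof -
    have "inj (\<lambda>(w::'a,s::'a). ((P11,s),(P11,w)))" by (auto simp: inj_on_def)
    from restr_summ[OF Ys this] show ?thesis by (simp add: split_def)
  qed
  have "infsum (\<lambda>w. Z (P11,w)) UNIV = infsum (\<lambda>w. infsum (\<lambda>s. Y ((P11,s),(P11,w))) UNIV) UNIV"
    by (simp add: Zg)
  also have "\<dots> = infsum (\<lambda>s. infsum (\<lambda>w. Y ((P11,s),(P11,w))) UNIV) UNIV"
    by (rule infsum_swap_banach[OF sw])
  also have "\<dots> = 0" by (simp add: H)
  finally have psiZ: "infsum (\<lambda>w. Z (P11,w)) UNIV = 0" .
  have "infsum (\<lambda>w. Z (P11,w)) UNIV = infsum (\<lambda>w. D (P11,w) + E11 (P11,w)) UNIV"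
    by (simp add: D_def)
  also have "\<dots> = infsum (\<lambda>w. D (P11,w)) UNIV + 1"
    by (simp add: infsum_add[OF Dg Eg] psiE)
  finally have "infsum (\<lambda>w. D (P11,w)) UNIV = -1" using psiZ
    by (metis add.commute add_eq_0_iff)
  then show False using psiD by simp
qed

end
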